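(* Let $A,B,C,O$ be members of a holey family of compact convex sets in the plane. Then $O\in conv(ABC)$ if and only if $\mathrm{hollow}(ABO)\cup\mathrm{hollow}(BCO)\cup\mathrm{hollow}(CAO)\subset \mathrm{hollow}(ABC)\cup A\cup B\cup C$.
   Context: A family of compact convex sets in the plane is holey if any two members intersect and no three distinct members have a common point. For three pairwise intersecting compact convex sets $X,Y,Z$ with no common point, $o(XYZ)=o(xyz)$ for any $x\in Y\cap Z$, $y\in X\cap Z$, $z\in X\cap Y$, where $o(xyz)=+1$ for a counterclockwise and $-1$ for a clockwise triangle (independent of the choice); and $\mathbb{R}^2\setminus(X\cup Y\cup Z)$ has exactly one bounded connected component, denoted $\mathrm{hollow}(XYZ)$. We write $O\in conv(XYZ)$ if $o(XYO)=o(YZO)=o(ZXO)=1$ or all three equal $-1$. *)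

theory Defs
  imports "HOL-Analysis.Analysis"
begin

type_synonym pt = "real^2"

definition orient :: "pt \<Rightarrow> pt \<Rightarrow> pt \<Rightarrow> int" where
  "orient x y z =
     (let d = (y$1 - x$1) * (z$2 - x$2) - (y$2 - x$2) * (z$1 - x$1)
      in if d > 0 then 1 else if d < 0 then -1 else 0)"

definition holey :: "pt set set \<Rightarrow> bool" where
  "holey F \<longleftrightarrow>
     (\<forall>X\<in>F. compact X \<and> convex X) \<and>
     (\<forall>X\<in>F. \<forall>Y\<in>F. X \<inter> Y \<noteq> {}) \<and>
     (\<forall>X\<in>F. \<forall>Y\<in>F. \<forall>Z\<in>F. X \<noteq> Y \<and> Y \<noteq> Z \<and> X \<noteq> Z \<longrightarrow> X \<inter> Y \<inter> Z = {})"

text \<open>o(XYZ) = o(xyz) for x in Y\<inter>Z, y in X\<inter>Z, z in X\<inter>Y (independent of choice per the paper).\<close>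
definition orientS :: "pt set \<Rightarrow> pt set \<Rightarrow> pt set \<Rightarrow> int" where
  "orientS X Y Z = orient (SOME x. x \<in> Y \<inter> Z) (SOME y. y \<in> X \<inter> Z) (SOME z. z \<in> X \<inter> Y)"

definition hollow :: "pt set \<Rightarrow> pt set \<Rightarrow> pt set \<Rightarrow> pt set" where
  "hollow X Y Z = (THE H. H \<in> components (- (X \<union> Y \<union> Z)) \<and> bounded H)"

definition in_conv :: "pt set \<Rightarrow> pt set \<Rightarrow> pt set \<Rightarrow> pt set \<Rightarrow> bool" where
  "in_conv O' X Y Z \<longleftrightarrow>
     (orientS X Y O' = 1 \<and> orientS Y Z O' = 1 \<and> orientS Z X O' = 1) \<or>
     (orientS X Y O' = -1 \<and> orientS Y Z O' = -1 \<and> orientS Z X O' = -1)"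

end

theory Submission
  imports Defs
begin


definition dt :: "pt \<Rightarrow> pt \<Rightarrow> pt \<Rightarrow> real" where
  "dt a b c = (b$1 - a$1) * (c$2 - a$2) - (b$2 - a$2) * (c$1 - a$1)"

lemma orient_dt: "orient a b c = (if dt a b c > 0 then 1 else if dt a b c < 0 then -1 else 0)"
  unfolding orient_def dt_def Let_def by simp

lemma dt_cyc: "dt b c a = dt a b c" unfolding dt_def by algebra
lemma dt_swap: "dt b a c = - dt a b c" unfolding dt_def by algebra

lemma dt_sum: "dt b c q + dt c a q + dt a b q = dt a b c"
  unfolding dt_def by algebra

lemma vec2_eq: "(u::pt) = v \<longleftrightarrow> u$1 = v$1 \<and> u$2 = v$2"
  by (auto simp: vec_eq_iff forall_2)

lemma dt_bary: "dt a b c *\<^sub>R q = dt b c q *\<^sub>R a + dt c a q *\<^sub>R b + dt a b q *\<^sub>R c"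
  unfolding vec2_eq dt_def by (simp; algebra)

definition inT :: "pt \<Rightarrow> pt \<Rightarrow> pt \<Rightarrow> pt \<Rightarrow> bool" where
  "inT q a b c \<longleftrightarrow> 0 < dt a b q * dt a b c \<and> 0 < dt b c q * dt a b c \<and> 0 < dt c a q * dt a b c"

lemma inT_iff: "inT q a b c \<longleftrightarrow>
   (dt q a b > 0 \<and> dt q b c > 0 \<and> dt q c a > 0) \<or> (dt q a b < 0 \<and> dt q b c < 0 \<and> dt q c a < 0)"
proof -
  have e: "dt a b q = dt q a b" "dt b c q = dt q b c" "dt c a q = dt q c a"
    using dt_cyc by metis+
  have s: "dt a b c = dt q a b + dt q b c + dt q c a" using dt_sum[of b c q a] e by linarith
  show ?thesis unfolding inT_def e s zero_less_mult_iff by linarith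
qed

lemma inT_cyc: "inT q b c a = inT q a b c" unfolding inT_iff by auto

lemma inT_nondeg: "inT q a b c \<Longrightarrow> dt a b c \<noteq> 0" unfolding inT_def by auto

lemma conv3: assumes "convex S" "a \<in> S" "b \<in> S" "c \<in> S" "0 \<le> u" "0 \<le> v" "0 \<le> w" "u+v+w = 1"
  shows "u *\<^sub>R a + v *\<^sub>R b + w *\<^sub>R c \<in> S"
proof -
  have "convex hull {a,b,c} \<subseteq> S" using assms by (intro hull_minimal) auto
  moreover have "u *\<^sub>R a + v *\<^sub>R b + w *\<^sub>R c \<in> convex hull {a,b,c}"
    unfolding convex_hull_3 using assms by blast
  ultimately show ?thesis by blast
qed

lemma inT_bary:
  assumes "inT q a b c"
  shows "q = (dt b c q / dt a b c) *\<^sub>R a + (dt c a q / dt a b c) *\<^sub>R b + (dt a b q / dt a b c) *\<^sub>R c"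
    "dt b c q / dt a b c > 0" "dt c a q / dt a b c > 0" "dt a b q / dt a b c > 0"
    "dt b c q / dt a b c + dt c a q / dt a b c + dt a b q / dt a b c = 1"
proof -
  have D: "dt a b c \<noteq> 0" using inT_nondeg assms by auto
  have "q = (1 / dt a b c) *\<^sub>R (dt a b c *\<^sub>R q)" using D by simp
  also have "\<dots> = (1 / dt a b c) *\<^sub>R (dt b c q *\<^sub>R a + dt c a q *\<^sub>R b + dt a b q *\<^sub>R c)"
    by (subst dt_bary[of a b c q]) (rule refl)
  also have "\<dots> = (dt b c q / dt a b c) *\<^sub>R a + (dt c a q / dt a b c) *\<^sub>R b + (dt a b q / dt a b c) *\<^sub>R c"
    by (simp only: scaleR_add_right scaleR_scaleR) simp
  finally show "q = (dt b c q / dt a b c) *\<^sub>R a + (dt c a q / dt a b c) *\<^sub>R b + (dt a b q / dt a b c) *\<^sub>R c" .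
  show "dt b c q / dt a b c > 0" "dt c a q / dt a b c > 0" "dt a b q / dt a b c > 0"
    using assms(1) unfolding inT_def zero_less_divide_iff zero_less_mult_iff by auto
  have "dt b c q / dt a b c + dt c a q / dt a b c + dt a b q / dt a b c = (dt b c q + dt c a q + dt a b q) / dt a b c"
    by (simp add: add_divide_distrib)
  also have "\<dots> = 1" using dt_sum[of b c q a] D by simp
  finally show "dt b c q / dt a b c + dt c a q / dt a b c + dt a b q / dt a b c = 1" .
qed

lemma inT_convex: assumes "inT q a b c" "convex S" "a \<in> S" "b \<in> S" "c \<in> S" shows "q \<in> S"
proof -
  note e = inT_bary[OF assms(1)]
  show ?thesis
    by (subst e(1), rule conv3[OF assms(2-5)]) (use e(2-5) in auto)
qed

lemma cont_dt: "continuous_on UNIV (\<lambda>q. dt a b q)" unfolding dt_def by (intro continuous_intros)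

lemma open_inT: "open {q. inT q a b c}"
proof -
  have "{q. inT q a b c} = {q. 0 < dt a b q * dt a b c} \<inter> {q. 0 < dt b c q * dt a b c} \<inter> {q. 0 < dt c a q * dt a b c}"
    unfolding inT_def by auto
  moreover have "open {q. 0 < dt u v q * dt a b c}" for u v
    by (rule open_Collect_less) (auto intro!: continuous_intros simp: dt_def)
  ultimately show ?thesis by (metis open_Int)
qed

lemma inT_interior: assumes "inT q a b c" shows "q \<in> interior (convex hull {a,b,c})"
proof -
  have "{q. inT q a b c} \<subseteq> convex hull {a,b,c}"
  proof
    fix p assume "p \<in> {q. inT q a b c}"
    hence "inT p a b c" by simp
    thus "p \<in> convex hull {a,b,c}" by (rule inT_convex[OF _ convex_convex_hull]) (auto intro: hull_inc)
  qed
  thus ?thesis using interior_maximal[OF _ open_inT] assms by blast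
qed


lemma collinear_cases:
  assumes "dt x y z = 0" "x \<noteq> y"
  shows "(\<exists>a b. 0 \<le> a \<and> 0 \<le> b \<and> a + b = 1 \<and> x = a *\<^sub>R y + b *\<^sub>R z) \<or>
         (\<exists>a b. 0 \<le> a \<and> 0 \<le> b \<and> a + b = 1 \<and> z = a *\<^sub>R x + b *\<^sub>R y) \<or>
         (\<exists>a b. 0 \<le> a \<and> 0 \<le> b \<and> a + b = 1 \<and> y = a *\<^sub>R x + b *\<^sub>R z)"
proof -
  define u1 where "u1 = y$1 - x$1"
  define u2 where "u2 = y$2 - x$2"
  define v1 where "v1 = z$1 - x$1"
  define v2 where "v2 = z$2 - x$2"
  have det: "u1 * v2 = u2 * v1" using assms(1) unfolding dt_def u1_def u2_def v1_def v2_def by simp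
  have d: "u1 * u1 + u2 * u2 \<noteq> 0"
  proof
    assume "u1 * u1 + u2 * u2 = 0"
    hence "u1 = 0" "u2 = 0" by (metis add_nonneg_eq_0_iff zero_le_square mult_eq_0_iff)+
    hence "x = y" unfolding u1_def u2_def vec2_eq by simp
    thus False using assms(2) by simp
  qed
  define m where "m = (u1* v1 + u2* v2) / (u1 * u1 + u2 * u2)"
  have e1: "v1 * (u1 * u1 + u2 * u2) = (u1* v1 + u2* v2) * u1" using det by algebra
  have e2: "v2 * (u1 * u1 + u2 * u2) = (u1* v1 + u2* v2) * u2" using det by algebra
  have m1: "v1 = m * u1" unfolding m_def using d e1 by (simp add: divide_simps)
  have m2: "v2 = m * u2" unfolding m_def using d e2 by (simp add: divide_simps)
  have zc: "z$1 = x$1 + m * (y$1 - x$1)" "z$2 = x$2 + m * (y$2 - x$2)"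
    using m1 m2 unfolding u1_def u2_def v1_def v2_def by simp_all
  consider "m \<le> 0" | "0 \<le> m \<and> m \<le> 1" | "1 \<le> m" by linarith
  thus ?thesis
  proof cases
    case 1
    have "x = (-m/(1-m)) *\<^sub>R y + (1/(1-m)) *\<^sub>R z"
    proof -
      have p: "1 - m > 0" using 1 by simp
      have "x$i = (-m/(1-m)) * y$i + (1/(1-m)) * z$i" if "z$i = x$i + m * (y$i - x$i)" for i
      proof -
        have "(-m/(1-m)) * y$i + (1/(1-m)) * z$i = (z$i - m * y$i) / (1-m)"
          using p by (simp add: divide_simps)
        also have "\<dots> = x$i" using p that by (simp add: divide_simps algebra_simps)
        finally show ?thesis by simp
      qed
      thus ?thesis unfolding vec2_eq using zc by simp
    qed
    moreover have "0 \<le> -m/(1-m)" "0 \<le> 1/(1-m)" "-m/(1-m) + 1/(1-m) = 1"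
      using 1 by (auto simp: field_simps)
    ultimately show ?thesis by (intro disjI1 exI[of _ "-m/(1-m)"] exI[of _ "1/(1-m)"]) auto
  next
    case 2
    have "z = (1-m) *\<^sub>R x + m *\<^sub>R y"
      unfolding vec2_eq using zc by (simp add: algebra_simps)
    thus ?thesis using 2 by (intro disjI2 disjI1 exI[of _ "1-m"] exI[of _ m]) auto
  next
    case 3
    have "y = (1 - 1/m) *\<^sub>R x + (1/m) *\<^sub>R z"
    proof -
      have p: "m > 0" using 3 by simp
      have "y$i = (1 - 1/m) * x$i + (1/m) * z$i" if "z$i = x$i + m * (y$i - x$i)" for i
      proof -
        have "(1 - 1/m) * x$i + (1/m) * z$i = (m * x$i - x$i + z$i) / m"
          using p by (simp add: divide_simps algebra_simps)
        also have "\<dots> = y$i" using p that by (simp add: divide_simps algebra_simps)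
        finally show ?thesis by simp
      qed
      thus ?thesis unfolding vec2_eq using zc by simp
    qed
    moreover have "0 \<le> 1 - 1/m" "0 \<le> 1/m" using 3 by (auto simp: field_simps)
    ultimately show ?thesis by (intro disjI2 exI[of _ "1 - 1/m"] exI[of _ "1/m"]) auto
  qed
qed

lemma nondeg:
  assumes "convex X" "convex Y" "convex Z" "X \<inter> Y \<inter> Z = {}"
    "x \<in> Y" "x \<in> Z" "y \<in> X" "y \<in> Z" "z \<in> X" "z \<in> Y"
  shows "dt x y z \<noteq> 0"
proof
  assume h: "dt x y z = 0"
  have "x \<noteq> y" using assms by blast
  from collinear_cases[OF h this] show False
  proof (elim disjE exE conjE)
    fix a b assume "0 \<le> a" "0 \<le> b" "a + b = 1" "x = a *\<^sub>R y + b *\<^sub>R z"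
    hence "x \<in> X" using convexD[OF assms(1)] assms by simp
    thus False using assms by blast
  next
    fix a b assume "0 \<le> a" "0 \<le> b" "a + b = 1" "z = a *\<^sub>R x + b *\<^sub>R y"
    hence "z \<in> Z" using convexD[OF assms(3)] assms by simp
    thus False using assms by blast
  next
    fix a b assume "0 \<le> a" "0 \<le> b" "a + b = 1" "y = a *\<^sub>R x + b *\<^sub>R z"
    hence "y \<in> Y" using convexD[OF assms(2)] assms by simp
    thus False using assms by blast
  qed
qed


lemma r1: fixes l a b c qi xi yi zi :: real
  assumes "qi = a * xi + b * yi + c * zi"
  shows "(l - a * (1 + l)) * qi = (l * b) * yi + (l * c) * zi + (- a) * (qi + l * (qi - xi))"
  using assms by algebra

lemma r2: fixes l a b c qi xi yi zi :: real
  assumes "qi = a * xi + b * yi + c * zi"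
  shows "((1 + l) * a - l) * xi = (- (1 + l) * b) * yi + (- (1 + l) * c) * zi + (qi + l * (qi - xi))"
  using assms by algebra

lemma scale_solve:
  fixes q y z w :: pt
  assumes "d \<noteq> 0" "d *\<^sub>R q = u *\<^sub>R y + v *\<^sub>R z + t *\<^sub>R w"
  shows "q = (u/d) *\<^sub>R y + (v/d) *\<^sub>R z + (t/d) *\<^sub>R w"
proof -
  have "q = (1/d) *\<^sub>R (d *\<^sub>R q)" using assms(1) by simp
  also have "\<dots> = (1/d) *\<^sub>R (u *\<^sub>R y + v *\<^sub>R z + t *\<^sub>R w)" using assms(2) by simp
  also have "\<dots> = (u/d) *\<^sub>R y + (v/d) *\<^sub>R z + (t/d) *\<^sub>R w"
    by (simp only: scaleR_add_right scaleR_scaleR) simp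
  finally show ?thesis .
qed

lemma ray_away:
  fixes x y z q :: pt
  assumes cX: "convex X" and cY: "convex Y" and cZ: "convex Z"
    and xY: "x \<in> Y" and xZ: "x \<in> Z" and yX: "y \<in> X" and zX: "z \<in> X" and xX: "x \<notin> X"
    and q: "q = a *\<^sub>R x + b *\<^sub>R y + c *\<^sub>R z" and s: "a + b + c = 1" and qV: "q \<notin> X \<union> Y \<union> Z"
    and cond: "(a < 0 \<and> 0 \<le> b \<and> 0 \<le> c) \<or> (b \<le> 0 \<and> c \<le> 0)" and l: "0 \<le> l"
  shows "q + l *\<^sub>R (q - x) \<notin> X \<union> Y \<union> Z"
proof -
  define w where "w = q + l *\<^sub>R (q - x)"
  have qw: "q = (1/(1+l)) *\<^sub>R w + (l/(1+l)) *\<^sub>R x"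
  proof -
    have "(1+l) *\<^sub>R q = 1 *\<^sub>R w + l *\<^sub>R x" unfolding w_def by (simp add: algebra_simps)
    hence "(1+l) *\<^sub>R q = 1 *\<^sub>R w + l *\<^sub>R x + 0 *\<^sub>R x" by simp
    from scale_solve[OF _ this] l show ?thesis by simp
  qed
  have co: "0 \<le> 1/(1+l)" "0 \<le> l/(1+l)" "1/(1+l) + l/(1+l) = 1" using l by (auto simp: field_simps)
  have "w \<notin> Y"
  proof
    assume "w \<in> Y" hence "q \<in> Y" using convexD[OF cY _ xY co] qw by simp
    thus False using qV by simp
  qed
  moreover have "w \<notin> Z"
  proof
    assume "w \<in> Z" hence "q \<in> Z" using convexD[OF cZ _ xZ co] qw by simp
    thus False using qV by simp
  qed
  moreover have "w \<notin> X"
  proof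
    assume wX: "w \<in> X"
    have qi: "q$i = a * x$i + b * y$i + c * z$i" for i using q by simp
    have wi: "w$i = q$i + l * (q$i - x$i)" for i unfolding w_def by simp
    from cond show False
    proof
      assume h: "a < 0 \<and> 0 \<le> b \<and> 0 \<le> c"
      define d where "d = l - a * (1 + l)"
      have "0 < (-a) * (1 + l)" using h l by (intro mult_pos_pos) auto
      hence d: "d > 0" unfolding d_def using l by simp
      have "d *\<^sub>R q = (l * b) *\<^sub>R y + (l * c) *\<^sub>R z + (- a) *\<^sub>R w"
        unfolding vec2_eq using r1[OF qi, of l] wi unfolding d_def by simp
      from scale_solve[OF _ this] d have e: "q = (l * b / d) *\<^sub>R y + (l * c / d) *\<^sub>R z + (- a / d) *\<^sub>R w" by simp
      have bc: "b + c = 1 - a" using s by linarith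
      have "l * b + l * c + - a = l * (b + c) - a" by (simp add: algebra_simps)
      also have "\<dots> = d" unfolding bc d_def by (simp add: algebra_simps)
      finally have "l * b + l * c + - a = d" .
      moreover have "(l * b + l * c + - a) / d = l * b / d + l * c / d + - a / d" by (simp add: add_divide_distrib diff_divide_distrib)
      ultimately have "l * b / d + l * c / d + - a / d = 1" using d by simp
      moreover have "0 \<le> l * b / d" "0 \<le> l * c / d" "0 \<le> - a / d" using h l d by (auto simp: divide_nonpos_pos)
      ultimately have "q \<in> X" using conv3[OF cX yX zX wX] e by metis
      thus False using qV by simp
    next
      assume h: "b \<le> 0 \<and> c \<le> 0"
      define d where "d = (1 + l) * a - l"
      have "(1 + l) * (a - 1) \<ge> 0" using h l s by (intro mult_nonneg_nonneg) auto
      hence d: "d \<ge> 1" unfolding d_def by (simp add: algebra_simps)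
      have "d *\<^sub>R x = (- (1 + l) * b) *\<^sub>R y + (- (1 + l) * c) *\<^sub>R z + 1 *\<^sub>R w"
        unfolding vec2_eq using r2[OF qi, of l] wi unfolding d_def by simp
      from scale_solve[OF _ this] d have e: "x = (- (1 + l) * b / d) *\<^sub>R y + (- (1 + l) * c / d) *\<^sub>R z + (1 / d) *\<^sub>R w" by simp
      have bc: "b + c = 1 - a" using s by linarith
      have "- (1 + l) * b + - (1 + l) * c + 1 = 1 - (1 + l) * (b + c)" by (simp add: algebra_simps)
      also have "\<dots> = d" unfolding bc d_def by (simp add: algebra_simps)
      finally have "- (1 + l) * b + - (1 + l) * c + 1 = d" .
      moreover have "(- (1 + l) * b + - (1 + l) * c + 1) / d = - (1 + l) * b / d + - (1 + l) * c / d + 1 / d" by (simp add: add_divide_distrib)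
      ultimately have "- (1 + l) * b / d + - (1 + l) * c / d + 1 / d = 1" using d by simp
      moreover have "0 \<le> - (1 + l) * b / d" "0 \<le> - (1 + l) * c / d" "0 \<le> 1 / d"
        using h l d by (auto intro!: divide_nonneg_pos mult_nonpos_nonpos)
      ultimately have "x \<in> X" using conv3[OF cX yX zX wX] e by metis
      thus False using xX by simp
    qed
  qed
  ultimately show ?thesis unfolding w_def by simp
qed


lemma bary:
  assumes D: "dt a b c \<noteq> 0"
  shows "q = (dt b c q / dt a b c) *\<^sub>R a + (dt c a q / dt a b c) *\<^sub>R b + (dt a b q / dt a b c) *\<^sub>R c"
    "dt b c q / dt a b c + dt c a q / dt a b c + dt a b q / dt a b c = 1"
proof -
  have "q = (1 / dt a b c) *\<^sub>R (dt a b c *\<^sub>R q)" using D by simp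
  also have "\<dots> = (1 / dt a b c) *\<^sub>R (dt b c q *\<^sub>R a + dt c a q *\<^sub>R b + dt a b q *\<^sub>R c)"
    by (subst dt_bary[of a b c q]) (rule refl)
  also have "\<dots> = (dt b c q / dt a b c) *\<^sub>R a + (dt c a q / dt a b c) *\<^sub>R b + (dt a b q / dt a b c) *\<^sub>R c"
    by (simp only: scaleR_add_right scaleR_scaleR) simp
  finally show "q = (dt b c q / dt a b c) *\<^sub>R a + (dt c a q / dt a b c) *\<^sub>R b + (dt a b q / dt a b c) *\<^sub>R c" .
  have "dt b c q / dt a b c + dt c a q / dt a b c + dt a b q / dt a b c = (dt b c q + dt c a q + dt a b q) / dt a b c"
    by (simp add: add_divide_distrib)
  also have "\<dots> = 1" using dt_sum[of b c q a] D by simp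
  finally show "dt b c q / dt a b c + dt c a q / dt a b c + dt a b q / dt a b c = 1" .
qed

lemma inT_coords: "inT q a b c \<longleftrightarrow> dt b c q / dt a b c > 0 \<and> dt c a q / dt a b c > 0 \<and> dt a b q / dt a b c > 0"
  unfolding inT_def zero_less_divide_iff zero_less_mult_iff by auto

lemma free_ray:
  fixes x y z q :: pt
  assumes cX: "convex X" and cY: "convex Y" and cZ: "convex Z" and e: "X \<inter> Y \<inter> Z = {}"
    and x: "x \<in> Y" "x \<in> Z" and y: "y \<in> X" "y \<in> Z" and z: "z \<in> X" "z \<in> Y"
    and qV: "q \<notin> X \<union> Y \<union> Z" and nq: "\<not> inT q x y z"
  shows "\<exists>v. v \<noteq> q \<and> (\<forall>l\<ge>0. q + l *\<^sub>R (q - v) \<notin> X \<union> Y \<union> Z)"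
proof -
  have D: "dt x y z \<noteq> 0" using nondeg[OF cX cY cZ e x y z] .
  define a where "a = dt y z q / dt x y z"
  define b where "b = dt z x q / dt x y z"
  define c where "c = dt x y q / dt x y z"
  have q: "q = a *\<^sub>R x + b *\<^sub>R y + c *\<^sub>R z" and s: "a + b + c = 1"
    using bary[OF D, of q] unfolding a_def b_def c_def by auto
  have np: "\<not> (a > 0 \<and> b > 0 \<and> c > 0)" using nq unfolding inT_coords a_def b_def c_def by auto
  have xX: "x \<notin> X" and yY: "y \<notin> Y" and zZ: "z \<notin> Z" using e x y z by auto
  have xq: "x \<noteq> q" "y \<noteq> q" "z \<noteq> q" using qV x y z by auto
  have VX: "X \<union> Y \<union> Z = Y \<union> Z \<union> X" "X \<union> Y \<union> Z = Z \<union> X \<union> Y" by auto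
  have rx: ?thesis if "(a < 0 \<and> 0 \<le> b \<and> 0 \<le> c) \<or> (b \<le> 0 \<and> c \<le> 0)"
    by (rule exI[of _ x]) (use ray_away[OF cX cY cZ x(1) x(2) y(1) z(1) xX q s qV that] xq(1) in auto)
  have ry: ?thesis if "(b < 0 \<and> 0 \<le> c \<and> 0 \<le> a) \<or> (c \<le> 0 \<and> a \<le> 0)"
  proof -
    have q': "q = b *\<^sub>R y + c *\<^sub>R z + a *\<^sub>R x" using q by (simp add: algebra_simps)
    have s': "b + c + a = 1" using s by simp
    have qV': "q \<notin> Y \<union> Z \<union> X" using qV by auto
    show ?thesis unfolding VX(1)
      by (rule exI[of _ y]) (use ray_away[OF cY cZ cX y(2) y(1) z(2) x(1) yY q' s' qV' that] xq(2) in auto)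
  qed
  have rz: ?thesis if "(c < 0 \<and> 0 \<le> a \<and> 0 \<le> b) \<or> (a \<le> 0 \<and> b \<le> 0)"
  proof -
    have q': "q = c *\<^sub>R z + a *\<^sub>R x + b *\<^sub>R y" using q by (simp add: algebra_simps)
    have s': "c + a + b = 1" using s by simp
    have qV': "q \<notin> Z \<union> X \<union> Y" using qV by auto
    show ?thesis unfolding VX(2)
      by (rule exI[of _ z]) (use ray_away[OF cZ cX cY z(1) z(2) x(2) y(2) zZ q' s' qV' that] xq(3) in auto)
  qed
  have edge: False if "a = 0 \<and> 0 \<le> b \<and> 0 \<le> c \<or> b = 0 \<and> 0 \<le> c \<and> 0 \<le> a \<or> c = 0 \<and> 0 \<le> a \<and> 0 \<le> b"
    using that
  proof (elim disjE conjE)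
    assume "a = 0" "0 \<le> b" "0 \<le> c"
    hence "q \<in> X" using convexD[OF cX y(1) z(1), of b c] q s by simp
    thus False using qV by simp
  next
    assume "b = 0" "0 \<le> c" "0 \<le> a"
    hence "q \<in> Y" using convexD[OF cY z(2) x(1), of c a] q s by (simp add: add.commute)
    thus False using qV by simp
  next
    assume "c = 0" "0 \<le> a" "0 \<le> b"
    hence "q \<in> Z" using convexD[OF cZ x(2) y(2), of a b] q s by simp
    thus False using qV by simp
  qed
  consider "(a < 0 \<and> 0 \<le> b \<and> 0 \<le> c) \<or> (b \<le> 0 \<and> c \<le> 0)"
    | "(b < 0 \<and> 0 \<le> c \<and> 0 \<le> a) \<or> (c \<le> 0 \<and> a \<le> 0)"
    | "(c < 0 \<and> 0 \<le> a \<and> 0 \<le> b) \<or> (a \<le> 0 \<and> b \<le> 0)"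
    | "a = 0 \<and> 0 \<le> b \<and> 0 \<le> c \<or> b = 0 \<and> 0 \<le> c \<and> 0 \<le> a \<or> c = 0 \<and> 0 \<le> a \<and> 0 \<le> b"
    using np by linarith
  thus ?thesis
  proof cases
    case 1 thus ?thesis by (rule rx)
  next
    case 2 thus ?thesis by (rule ry)
  next
    case 3 thus ?thesis by (rule rz)
  next
    case 4 thus ?thesis using edge by blast
  qed
qed


lemma inside_char:
  fixes x y z :: pt
  assumes cX: "convex X" and cY: "convex Y" and cZ: "convex Z" and e: "X \<inter> Y \<inter> Z = {}"
    and x: "x \<in> Y" "x \<in> Z" and y: "y \<in> X" "y \<in> Z" and z: "z \<in> X" "z \<in> Y"
  shows "inside (X \<union> Y \<union> Z) = {q. inT q x y z} - (X \<union> Y \<union> Z)"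
proof
  show "{q. inT q x y z} - (X \<union> Y \<union> Z) \<subseteq> inside (X \<union> Y \<union> Z)"
  proof
    fix q assume "q \<in> {q. inT q x y z} - (X \<union> Y \<union> Z)"
    hence q: "inT q x y z" "q \<notin> X \<union> Y \<union> Z" by auto
    have "q \<in> interior (convex hull {x,y,z})" by (rule inT_interior[OF q(1)])
    hence "q \<in> inside (closed_segment x y \<union> closed_segment y z \<union> closed_segment z x)"
      using inside_of_triangle[of x y z] by simp
    moreover have "closed_segment x y \<union> closed_segment y z \<union> closed_segment z x \<subseteq> X \<union> Y \<union> Z"
      using closed_segment_subset[OF x(2) y(2) cZ] closed_segment_subset[OF y(1) z(1) cX]
        closed_segment_subset[OF z(2) x(1) cY] by blast
    ultimately show "q \<in> inside (X \<union> Y \<union> Z)" using inside_mono q(2) by blast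
  qed
  show "inside (X \<union> Y \<union> Z) \<subseteq> {q. inT q x y z} - (X \<union> Y \<union> Z)"
  proof
    fix q assume "q \<in> inside (X \<union> Y \<union> Z)"
    hence qV: "q \<notin> X \<union> Y \<union> Z" and bd: "bounded (connected_component_set (- (X \<union> Y \<union> Z)) q)"
      unfolding inside_def by auto
    have "inT q x y z"
    proof (rule ccontr)
      assume "\<not> inT q x y z"
      from free_ray[OF cX cY cZ e x y z qV this] obtain v where
        v: "v \<noteq> q" "\<And>l. 0 \<le> l \<Longrightarrow> q + l *\<^sub>R (q - v) \<notin> X \<union> Y \<union> Z" by blast
      define R where "R = (\<lambda>l. q + l *\<^sub>R (q - v)) ` {0::real..}"
      have "connected R" unfolding R_def
        by (intro connected_continuous_image continuous_intros convex_connected) (auto simp: convex_real_interval)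
      moreover have "R \<subseteq> - (X \<union> Y \<union> Z)" unfolding R_def using v(2) by auto
      moreover have "q \<in> R" unfolding R_def by (rule image_eqI[of _ _ 0]) auto
      ultimately have "R \<subseteq> connected_component_set (- (X \<union> Y \<union> Z)) q"
        by (intro connected_component_maximal) auto
      hence "bounded R" using bd bounded_subset by blast
      then obtain B where B: "\<And>r. r \<in> R \<Longrightarrow> norm r \<le> B" unfolding bounded_iff by blast
      have nv: "norm (q - v) > 0" using v(1) by simp
      define l where "l = (\<bar>B\<bar> + norm q + 1) / norm (q - v)"
      have l0: "0 \<le> l" unfolding l_def using nv by simp
      have "q + l *\<^sub>R (q - v) \<in> R" unfolding R_def using l0 by auto
      hence "norm (q + l *\<^sub>R (q - v)) \<le> B" by (rule B)
      moreover have "norm (l *\<^sub>R (q - v)) - norm q \<le> norm (q + l *\<^sub>R (q - v))"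
        using norm_diff_ineq[of "l *\<^sub>R (q - v)" "q"] by (simp add: add.commute)
      moreover have "norm (l *\<^sub>R (q - v)) = \<bar>B\<bar> + norm q + 1"
        unfolding l_def using nv by simp
      ultimately show False by linarith
    qed
    thus "q \<in> {q. inT q x y z} - (X \<union> Y \<union> Z)" using qV by simp
  qed
qed


definition sw :: "pt \<Rightarrow> pt \<Rightarrow> pt \<Rightarrow> real \<Rightarrow> real \<Rightarrow> pt" where
  "sw x y z t l = x + l *\<^sub>R ((z + t *\<^sub>R (y - z)) - x)"

lemma conn01:
  fixes A B :: "real set"
  assumes "closed A" "closed B" "{0..1} \<subseteq> A \<union> B" "A \<inter> {0..1} \<noteq> {}" "B \<inter> {0..1} \<noteq> {}"
  shows "A \<inter> B \<inter> {0..1} \<noteq> {}"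
proof -
  have "connected {0..1::real}" by simp
  thus ?thesis unfolding connected_closed using assms by blast
qed

lemma seg_param: "0 \<le> u \<Longrightarrow> u \<le> 1 \<Longrightarrow> a + u *\<^sub>R (b - a) \<in> closed_segment a b"
  unfolding closed_segment_def by (rule CollectI, rule exI[of _ u]) (auto simp: algebra_simps)

lemma line_convex:
  fixes x d :: pt
  assumes "convex S" "x + la *\<^sub>R d \<in> S" "x + lb *\<^sub>R d \<in> S" "la \<le> l" "l \<le> lb"
  shows "x + l *\<^sub>R d \<in> S"
proof (cases "la = lb")
  case True thus ?thesis using assms by simp
next
  case False
  hence lt: "la < lb" using assms by simp
  define u where "u = (l - la) / (lb - la)"
  have u: "0 \<le> u" "u \<le> 1" unfolding u_def using assms lt by (auto simp: divide_simps)
  have "x + l *\<^sub>R d = (x + la *\<^sub>R d) + u *\<^sub>R ((x + lb *\<^sub>R d) - (x + la *\<^sub>R d))"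
  proof -
    have "u * (lb - la) = l - la" unfolding u_def using lt by simp
    hence "l = la + u * (lb - la)" by simp
    hence "l *\<^sub>R d = (la + u * (lb - la)) *\<^sub>R d" by simp
    hence "l *\<^sub>R d = la *\<^sub>R d + (u * (lb - la)) *\<^sub>R d" by (simp only: scaleR_left_distrib)
    thus ?thesis by (simp add: algebra_simps)
  qed
  also have "\<dots> \<in> closed_segment (x + la *\<^sub>R d) (x + lb *\<^sub>R d)" by (rule seg_param[OF u])
  also have "\<dots> \<subseteq> S" using assms closed_segment_subset by blast
  finally show ?thesis .
qed

lemma dt_affine:
  assumes "a + b + c = 1"
  shows "dt u v (a *\<^sub>R x + b *\<^sub>R y + c *\<^sub>R z) = a * dt u v x + b * dt u v y + c * dt u v z"
proof -
  have c: "c = 1 - a - b" using assms by simp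
  show ?thesis unfolding c dt_def by (simp add: algebra_simps)
qed

lemma inT_of_coords:
  assumes "dt x y z \<noteq> 0" "0 < a" "0 < b" "0 < c" "a + b + c = 1"
  shows "inT (a *\<^sub>R x + b *\<^sub>R y + c *\<^sub>R z) x y z"
proof -
  let ?q = "a *\<^sub>R x + b *\<^sub>R y + c *\<^sub>R z"
  have z0: "dt u v u = 0" "dt u v v = 0" for u v unfolding dt_def by simp_all
  have "dt x y ?q = c * dt x y z" using dt_affine[OF assms(5)] z0 by simp
  moreover have "dt y z ?q = a * dt x y z" using dt_affine[OF assms(5), of y z] z0 dt_cyc[of y z x] by simp
  moreover have "dt z x ?q = b * dt x y z" using dt_affine[OF assms(5), of z x] z0 dt_cyc[of z x y] by (simp add: dt_cyc)
  ultimately show ?thesis unfolding inT_def using assms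
    by (simp add: mult.assoc zero_less_mult_iff) (metis not_square_less_zero linorder_neqE_linordered_idom)
qed

lemma sw_eq: "sw x y z t l = (1 - l) *\<^sub>R x + (l * t) *\<^sub>R y + (l * (1 - t)) *\<^sub>R z"
  unfolding sw_def by (simp add: algebra_simps)

lemma sw_inT: "dt x y z \<noteq> 0 \<Longrightarrow> 0 < t \<Longrightarrow> t < 1 \<Longrightarrow> 0 < l \<Longrightarrow> l < 1 \<Longrightarrow> inT (sw x y z t l) x y z"
  unfolding sw_eq by (rule inT_of_coords) (auto simp: algebra_simps)

lemma inT_sw: assumes "inT q x y z" shows "\<exists>t l. 0 < t \<and> t < 1 \<and> 0 < l \<and> l < 1 \<and> q = sw x y z t l"
proof -
  note b = inT_bary[OF assms]
  define a1 where "a1 = dt y z q / dt x y z"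
  define b1 where "b1 = dt z x q / dt x y z"
  define c1 where "c1 = dt x y q / dt x y z"
  have q: "q = a1 *\<^sub>R x + b1 *\<^sub>R y + c1 *\<^sub>R z" and p: "a1 > 0" "b1 > 0" "c1 > 0" and s: "a1 + b1 + c1 = 1"
    using b unfolding a1_def b1_def c1_def by auto
  define l where "l = b1 + c1"
  define t where "t = b1 / (b1 + c1)"
  have "sw x y z t l = q"
  proof -
    have "1 - l = a1" "l * t = b1" "l * (1 - t) = c1" unfolding l_def t_def using s p by (auto simp: field_simps)
    thus ?thesis unfolding sw_eq q by simp
  qed
  moreover have "0 < t" "t < 1" "0 < l" "l < 1" unfolding t_def l_def using p s by (auto simp: field_simps)
  ultimately show ?thesis by metis
qed

lemma cont_sw_t: "isCont (\<lambda>t. sw x y z t l) t0" unfolding sw_def by (intro continuous_intros)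
lemma cont_sw_l: "isCont (\<lambda>l. sw x y z t l) l0" unfolding sw_def by (intro continuous_intros)
lemma cont_sw2: "continuous_on UNIV (\<lambda>p. sw x y z (fst p) (snd p))" unfolding sw_def by (intro continuous_intros)

lemma sw_line: "sw x y z t l = x + l *\<^sub>R (sw x y z t 1 - x)" unfolding sw_def by simp
lemma sw_0: "sw x y z t 0 = x" unfolding sw_def by simp
lemma sw_1: "sw x y z t 1 = z + t *\<^sub>R (y - z)" unfolding sw_def by simp

lemma sw_side: "0 \<le> t \<Longrightarrow> t \<le> 1 \<Longrightarrow> sw x y z t 1 \<in> closed_segment z y"
  unfolding sw_1 by (rule seg_param)

lemma sw_seg: "0 \<le> l \<Longrightarrow> l \<le> 1 \<Longrightarrow> sw x y z t l \<in> closed_segment x (sw x y z t 1)"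
  by (subst sw_line) (rule seg_param)


lemma closed_proj:
  fixes S :: "pt set"
  assumes "closed S"
  shows "closed {t \<in> {0..1}. \<exists>l\<in>{0..1}. sw x y z t l \<in> S}"
proof -
  define K where "K = ({0..1} \<times> {0..1}) \<inter> (\<lambda>p. sw x y z (fst p) (snd p)) -` S"
  have "compact K" unfolding K_def
    by (intro compact_Int_closed compact_Times compact_Icc continuous_closed_vimage assms)
       (use cont_sw2[of x y z] in \<open>auto simp: continuous_on_eq_continuous_at\<close>)
  hence "compact (fst ` K)" by (intro compact_continuous_image continuous_intros)
  moreover have "fst ` K = {t \<in> {0..1}. \<exists>l\<in>{0..1}. sw x y z t l \<in> S}"
    unfolding K_def by force
  ultimately show ?thesis using compact_imp_closed by metis
qed

lemma kkm:
  fixes x y z :: pt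
  assumes cP: "closed P" and cY: "closed Y" and cZ: "closed Z" and vY: "convex Y" and vZ: "convex Z"
    and x: "x \<in> Y" "x \<in> Z" and z: "z \<in> Y" and y: "y \<in> Z" and side: "closed_segment z y \<subseteq> P"
    and e: "Y \<inter> Z \<inter> P = {}"
  shows "\<exists>t l. 0 < t \<and> t < 1 \<and> 0 < l \<and> l < 1 \<and> sw x y z t l \<notin> P \<union> Y \<union> Z"
proof (rule ccontr)
  assume "\<not> ?thesis"
  hence H: "\<And>t l. 0 < t \<Longrightarrow> t < 1 \<Longrightarrow> 0 < l \<Longrightarrow> l < 1 \<Longrightarrow> sw x y z t l \<in> P \<union> Y \<union> Z" by blast
  have all: "sw x y z t l \<in> P \<union> Y \<union> Z" if t: "0 \<le> t" "t \<le> 1" and l: "0 \<le> l" "l \<le> 1" for t l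
  proof -
    consider "t = 0" | "t = 1" | "0 < t \<and> t < 1 \<and> l = 0" | "0 < t \<and> t < 1 \<and> l = 1" | "0 < t \<and> t < 1 \<and> 0 < l \<and> l < 1"
      using t l by linarith
    thus ?thesis
    proof cases
      case 1
      have "sw x y z t l \<in> closed_segment x z" using sw_seg[OF l, of x y z t] 1 by (simp add: sw_1)
      thus ?thesis using closed_segment_subset[OF x(1) z vY] by blast
    next
      case 2
      have "sw x y z t l \<in> closed_segment x y" using sw_seg[OF l, of x y z t] 2 by (simp add: sw_1)
      thus ?thesis using closed_segment_subset[OF x(2) y vZ] by blast
    next
      case 3 thus ?thesis using x by (simp add: sw_0)
    next
      case 4 thus ?thesis using sw_side[OF t, of x y z] side by auto
    next
      case 5 thus ?thesis using H by blast
    qed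
  qed
  define D where "D = {t \<in> {0..1}. \<exists>l\<in>{0..1}. sw x y z t l \<in> P \<inter> Y}"
  define E where "E = {t \<in> {0..1}. \<exists>l\<in>{0..1}. sw x y z t l \<in> P \<inter> Z}"
  have cD: "closed D" unfolding D_def by (rule closed_proj) (intro closed_Int cP cY)
  have cE: "closed E" unfolding E_def by (rule closed_proj) (intro closed_Int cP cZ)
  have cover: "t \<in> D \<union> E" if t: "t \<in> {0..1}" for t
  proof -
    let ?A = "(\<lambda>l. sw x y z t l) -` P"
    let ?B = "(\<lambda>l. sw x y z t l) -` (Y \<union> Z)"
    have "closed ?A" "closed ?B" using cP cY cZ by (auto intro!: continuous_closed_vimage cont_sw_l)
    moreover have "{0..1} \<subseteq> ?A \<union> ?B" using all t by fastforce
    moreover have "?A \<inter> {0..1::real} \<noteq> {}"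
    proof -
      have "sw x y z t 1 \<in> P" using sw_side[of t x y z] t side by auto
      thus ?thesis by auto
    qed
    moreover have "?B \<inter> {0..1::real} \<noteq> {}"
    proof -
      have "sw x y z t 0 \<in> Y \<union> Z" using x by (simp add: sw_0)
      thus ?thesis by auto
    qed
    ultimately have "?A \<inter> ?B \<inter> {0..1} \<noteq> {}"
      by (rule conn01)
    then obtain l where "l \<in> {0..1}" "sw x y z t l \<in> P" "sw x y z t l \<in> Y \<union> Z" by blast
    thus ?thesis unfolding D_def E_def using t by auto
  qed
  have disj: False if tD: "t \<in> D" and tE: "t \<in> E" for t
  proof -
    obtain l1 where l1: "l1 \<in> {0..1}" "sw x y z t l1 \<in> P \<inter> Y" using tD unfolding D_def by blast
    obtain l2 where l2: "l2 \<in> {0..1}" "sw x y z t l2 \<in> P \<inter> Z" using tE unfolding E_def by blast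
    have x0: "x + 0 *\<^sub>R (sw x y z t 1 - x) = x" by simp
    show False
    proof (cases "l1 \<le> l2")
      case True
      have "x + l1 *\<^sub>R (sw x y z t 1 - x) \<in> Z"
        by (rule line_convex[where S=Z and x=x and d="sw x y z t 1 - x" and la=0 and lb=l2 and l=l1])
           (use vZ x l1 l2 True sw_line[of x y z t l2] in auto)
      thus False using l1 e sw_line[of x y z t l1] by auto
    next
      case False
      hence le: "l2 \<le> l1" by simp
      have "x + l2 *\<^sub>R (sw x y z t 1 - x) \<in> Y"
        by (rule line_convex[where S=Y and x=x and d="sw x y z t 1 - x" and la=0 and lb=l1 and l=l2])
           (use vY x l1 l2 le sw_line[of x y z t l1] in auto)
      thus False using l2 e sw_line[of x y z t l2] by auto
    qed
  qed
  have "0 \<in> D"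
  proof -
    have "sw x y z 0 1 = z" by (simp add: sw_1)
    moreover have "z \<in> P" using side by auto
    ultimately show ?thesis unfolding D_def using z by (intro CollectI conjI bexI[of _ 1]) auto
  qed
  moreover have "1 \<in> E"
  proof -
    have "sw x y z 1 1 = y" by (simp add: sw_1)
    moreover have "y \<in> P" using side by auto
    ultimately show ?thesis unfolding E_def using y by (intro CollectI conjI bexI[of _ 1]) auto
  qed
  moreover have "{0..1} \<subseteq> D \<union> E" using cover by blast
  ultimately have "D \<inter> E \<inter> {0..1} \<noteq> {}"
    by (intro conn01 cD cE) auto
  thus False using disj by blast
qed


lemma tri_split:
  fixes x zz w s r :: pt
  assumes cP: "convex P" and cQ: "convex Q" and x: "x \<in> Q" and zz: "zz \<in> P" "zz \<in> Q"
    and w: "w \<in> P" "w \<in> Q" and s: "s \<in> P" and ws: "w \<in> closed_segment x s"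
    and r: "r \<in> convex hull {zz, x, s}"
  shows "r \<in> P \<union> Q"
proof -
  have "convex hull {zz, x, s} = \<Union> (closed_segment zz ` (convex hull {x, s}))"
    by (simp add: convex_hull_insert_segments)
  then obtain r' where r': "r' \<in> convex hull {x, s}" "r \<in> closed_segment zz r'" using r by auto
  have "r' \<in> closed_segment x w \<union> closed_segment w s"
    using r'(1) Un_closed_segment[OF ws] by (simp add: segment_convex_hull)
  thus ?thesis
  proof
    assume "r' \<in> closed_segment x w"
    hence "r' \<in> Q" using closed_segment_subset[OF x w(2) cQ] by blast
    hence "r \<in> Q" using closed_segment_subset[OF zz(2) _ cQ] r'(2) by blast
    thus ?thesis by simp
  next
    assume "r' \<in> closed_segment w s"
    hence "r' \<in> P" using closed_segment_subset[OF w(1) s cP] by blast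
    hence "r \<in> P" using closed_segment_subset[OF zz(1) _ cP] r'(2) by blast
    thus ?thesis by simp
  qed
qed

lemma seg_in_hull: "a \<in> convex hull S \<Longrightarrow> b \<in> convex hull S \<Longrightarrow> closed_segment a b \<subseteq> convex hull S"
  by (rule closed_segment_subset) (auto intro: convex_convex_hull)

lemma hole_connected:
  fixes x y z :: pt
  assumes cX: "convex X" and cY: "convex Y" and cZ: "convex Z"
    and clX: "closed X" and clY: "closed Y" and clZ: "closed Z" and e: "X \<inter> Y \<inter> Z = {}"
    and x: "x \<in> Y" "x \<in> Z" and y: "y \<in> X" "y \<in> Z" and z: "z \<in> X" "z \<in> Y"
  shows "connected ({q. inT q x y z} - (X \<union> Y \<union> Z))"
proof -
  define V where "V = X \<union> Y \<union> Z"
  define R where "R = {q. inT q x y z} - V"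
  have D: "dt x y z \<noteq> 0" using nondeg[OF cX cY cZ e x y z] .
  have clV: "closed V" unfolding V_def using clX clY clZ by auto
  have side: "closed_segment z y \<subseteq> X" using closed_segment_subset[OF z(1) y(1) cX] .
  define Fib where "Fib t = {l. 0 < l \<and> l < 1 \<and> sw x y z t l \<notin> V}" for t
  have fibI: "l \<in> Fib t" if l1: "l1 \<in> Fib t" and l2: "l2 \<in> Fib t" and le: "l1 \<le> l" "l \<le> l2"
    and t: "0 \<le> t" "t \<le> 1" for t l l1 l2
  proof -
    let ?d = "sw x y z t 1 - x"
    have sl: "sw x y z t k = x + k *\<^sub>R ?d" for k by (rule sw_line)
    have s1: "sw x y z t 1 \<in> X" using sw_side[OF t, of x y z] side by auto
    have "sw x y z t l \<notin> Y"
    proof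
      assume "sw x y z t l \<in> Y"
      hence "x + l1 *\<^sub>R ?d \<in> Y"
        by (intro line_convex[where S=Y and x=x and d="?d" and la=0 and lb=l and l=l1]) (use cY x l1 le sl[of l] in \<open>auto simp: Fib_def\<close>)
      thus False using l1 sl[of l1] unfolding Fib_def V_def by auto
    qed
    moreover have "sw x y z t l \<notin> Z"
    proof
      assume "sw x y z t l \<in> Z"
      hence "x + l1 *\<^sub>R ?d \<in> Z"
        by (intro line_convex[where S=Z and x=x and d="?d" and la=0 and lb=l and l=l1]) (use cZ x l1 le sl[of l] in \<open>auto simp: Fib_def\<close>)
      thus False using l1 sl[of l1] unfolding Fib_def V_def by auto
    qed
    moreover have "sw x y z t l \<notin> X"
    proof
      assume "sw x y z t l \<in> X"
      hence "x + l2 *\<^sub>R ?d \<in> X"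
        by (intro line_convex[where S=X and x=x and d="?d" and la=l and lb=1 and l=l2]) (use cX s1 l2 le sl[of l] sl[of 1] in \<open>auto simp: Fib_def\<close>)
      thus False using l2 sl[of l2] unfolding Fib_def V_def by auto
    qed
    ultimately show ?thesis using l1 l2 le unfolding Fib_def V_def by auto
  qed
  define Th where "Th = {t. 0 < t \<and> t < 1 \<and> Fib t \<noteq> {}}"
  have Rsw: "q \<in> R \<longleftrightarrow> (\<exists>t l. 0 < t \<and> t < 1 \<and> l \<in> Fib t \<and> q = sw x y z t l)" for q
  proof
    assume "q \<in> R"
    then obtain t l where "0 < t" "t < 1" "0 < l" "l < 1" "q = sw x y z t l" "q \<notin> V"
      using inT_sw unfolding R_def by blast
    thus "\<exists>t l. 0 < t \<and> t < 1 \<and> l \<in> Fib t \<and> q = sw x y z t l" unfolding Fib_def by blast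
  next
    assume "\<exists>t l. 0 < t \<and> t < 1 \<and> l \<in> Fib t \<and> q = sw x y z t l"
    then obtain t l where "0 < t" "t < 1" "l \<in> Fib t" "q = sw x y z t l" by blast
    thus "q \<in> R" unfolding R_def Fib_def using sw_inT[OF D] by auto
  qed
  have Thint: "is_interval Th"
    unfolding is_interval_1
  proof (intro ballI allI impI)
    fix t1 t2 t assume t1: "t1 \<in> Th" and t2: "t2 \<in> Th" and tt: "t1 \<le> t \<and> t \<le> t2"
    show "t \<in> Th"
    proof (rule ccontr)
      assume nt: "t \<notin> Th"
      have t01: "0 < t" "t < 1" using t1 t2 tt unfolding Th_def by auto
      hence F: "Fib t = {}" using nt unfolding Th_def by auto
      have all: "sw x y z t l \<in> V" if lh: "0 \<le> l" "l \<le> 1" for l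
      proof -
        consider "l = 0" | "l = 1" | "0 < l \<and> l < 1" using lh by linarith
        thus ?thesis
        proof cases
          case 1 thus ?thesis using x unfolding V_def by (simp add: sw_0)
        next
          case 2 thus ?thesis using sw_side[of t x y z] t01 side unfolding V_def by auto
        next
          case 3 thus ?thesis using F unfolding Fib_def by auto
        qed
      qed
      let ?A = "(\<lambda>l. sw x y z t l) -` X"
      let ?B = "(\<lambda>l. sw x y z t l) -` (Y \<union> Z)"
      have "closed ?A" "closed ?B" using clX clY clZ by (auto intro!: continuous_closed_vimage cont_sw_l)
      moreover have "{0..1} \<subseteq> ?A \<union> ?B" using all unfolding V_def by fastforce
      moreover have "?A \<inter> {0..1::real} \<noteq> {}"
      proof -
        have "sw x y z t 1 \<in> X" using sw_side[of t x y z] t01 side by auto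
        thus ?thesis by auto
      qed
      moreover have "?B \<inter> {0..1::real} \<noteq> {}"
      proof -
        have "sw x y z t 0 \<in> Y \<union> Z" using x by (simp add: sw_0)
        thus ?thesis by auto
      qed
      ultimately have "?A \<inter> ?B \<inter> {0..1} \<noteq> {}"
        by (rule conn01)
      then obtain l0 where l0: "l0 \<in> {0..1}" "sw x y z t l0 \<in> X" "sw x y z t l0 \<in> Y \<union> Z" by blast
      define w where "w = sw x y z t l0"
      define s where "s = sw x y z t 1"
      have ws: "w \<in> closed_segment x s" unfolding w_def s_def using sw_seg l0(1) by auto
      have sX: "s \<in> X" unfolding s_def using sw_side[of t x y z] t01 side by auto
      from l0(3) show False
      proof
        assume wY: "sw x y z t l0 \<in> Y"
        obtain l where l: "l \<in> Fib t1" using t1 unfolding Th_def by auto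
        have t1p: "0 < t1" "t1 \<le> t" using t1 tt unfolding Th_def by auto
        have "sw x y z t1 1 \<in> closed_segment z s"
        proof -
          have "sw x y z t1 1 = z + (t1/t) *\<^sub>R (s - z)" unfolding s_def sw_1 using t01 by (simp add: algebra_simps)
          also have "\<dots> \<in> closed_segment z s" by (rule seg_param) (use t1p t01 in auto)
          finally show ?thesis .
        qed
        hence "sw x y z t1 1 \<in> convex hull {z, x, s}" using seg_in_hull[of z "{z,x,s}" s] by (auto intro: hull_inc)
        hence "closed_segment x (sw x y z t1 1) \<subseteq> convex hull {z, x, s}" by (intro seg_in_hull) (auto intro: hull_inc)
        moreover have "sw x y z t1 l \<in> closed_segment x (sw x y z t1 1)" using sw_seg[of l] l unfolding Fib_def by auto
        ultimately have "sw x y z t1 l \<in> convex hull {z, x, s}" by blast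
        hence "sw x y z t1 l \<in> X \<union> Y"
          by (rule tri_split[OF cX cY x(1) z(1) z(2) l0(2) wY sX ws[unfolded w_def]])
        thus False using l unfolding Fib_def V_def by auto
      next
        assume wZ: "sw x y z t l0 \<in> Z"
        obtain l where l: "l \<in> Fib t2" using t2 unfolding Th_def by auto
        have t2p: "t2 < 1" "t \<le> t2" using t2 tt unfolding Th_def by auto
        have "sw x y z t2 1 \<in> closed_segment y s"
        proof -
          have "sw x y z t2 1 = y + ((1 - t2)/(1 - t)) *\<^sub>R (s - y)"
          proof -
            have "s - y = (1 - t) *\<^sub>R (z - y)" unfolding s_def sw_1 by (simp add: algebra_simps)
            hence "((1 - t2)/(1 - t)) *\<^sub>R (s - y) = (1 - t2) *\<^sub>R (z - y)" using t01 by simp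
            thus ?thesis unfolding sw_1 by (simp add: algebra_simps)
          qed
          also have "\<dots> \<in> closed_segment y s" by (rule seg_param) (use t2p t01 in auto)
          finally show ?thesis .
        qed
        hence "sw x y z t2 1 \<in> convex hull {y, x, s}" using seg_in_hull[of y "{y,x,s}" s] by (auto intro: hull_inc)
        hence "closed_segment x (sw x y z t2 1) \<subseteq> convex hull {y, x, s}" by (intro seg_in_hull) (auto intro: hull_inc)
        moreover have "sw x y z t2 l \<in> closed_segment x (sw x y z t2 1)" using sw_seg[of l] l unfolding Fib_def by auto
        ultimately have "sw x y z t2 l \<in> convex hull {y, x, s}" by blast
        hence "sw x y z t2 l \<in> X \<union> Z"
          by (rule tri_split[OF cX cZ x(2) y(1) y(2) l0(2) wZ sX ws[unfolded w_def]])
        thus False using l unfolding Fib_def V_def by auto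
      qed
    qed
  qed
  show ?thesis
    unfolding connected_def V_def[symmetric] R_def[symmetric]
  proof
    assume "\<exists>A B. open A \<and> open B \<and> R \<subseteq> A \<union> B \<and> A \<inter> B \<inter> R = {} \<and> A \<inter> R \<noteq> {} \<and> B \<inter> R \<noteq> {}"
    then obtain e1 e2 where o: "open e1" "open e2" and cov: "R \<subseteq> e1 \<union> e2" and dis: "e1 \<inter> e2 \<inter> R = {}"
      and ne: "e1 \<inter> R \<noteq> {}" "e2 \<inter> R \<noteq> {}" by blast
    define T where "T e = {t. 0 < t \<and> t < 1 \<and> (\<exists>l\<in>Fib t. sw x y z t l \<in> e)}" for e
    have oT: "open (T e)" if "open e" for e
    proof -
      define G where "G l = {0<..<1} \<inter> (\<lambda>t. sw x y z t l) -` (e \<inter> - V)" for l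
      have eq: "T e = (\<Union>l\<in>{0<..<1}. G l)"
        unfolding T_def Fib_def G_def by auto
      have oG: "open (G l)" for l
        unfolding G_def using that clV by (intro open_Int open_greaterThanLessThan continuous_open_vimage cont_sw_t) auto
      show ?thesis unfolding eq by (intro open_UN ballI oG)
    qed
    have c1: "Th \<subseteq> T e1 \<union> T e2"
    proof
      fix t assume "t \<in> Th"
      then obtain l where "l \<in> Fib t" "0 < t" "t < 1" unfolding Th_def by auto
      moreover hence "sw x y z t l \<in> R" using Rsw by blast
      ultimately show "t \<in> T e1 \<union> T e2" using cov unfolding T_def by blast
    qed
    have c2: "T e1 \<inter> T e2 \<inter> Th = {}"
    proof (rule ccontr)
      assume "T e1 \<inter> T e2 \<inter> Th \<noteq> {}"
      then obtain t l1 l2 where t: "0 < t" "t < 1" and l1: "l1 \<in> Fib t" "sw x y z t l1 \<in> e1"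
        and l2: "l2 \<in> Fib t" "sw x y z t l2 \<in> e2" unfolding T_def by blast
      define C where "C = (\<lambda>l. sw x y z t l) ` {min l1 l2..max l1 l2}"
      have "connected C" unfolding C_def
        by (intro connected_continuous_image connected_Icc) (auto intro!: continuous_at_imp_continuous_on cont_sw_l)
      moreover have "C \<subseteq> R"
      proof
        fix q assume "q \<in> C"
        then obtain l where l: "l \<in> {min l1 l2..max l1 l2}" "q = sw x y z t l" unfolding C_def by auto
        have "l \<in> Fib t"
        proof (cases "l1 \<le> l2")
          case True thus ?thesis using fibI[OF l1(1) l2(1)] l t by auto
        next
          case False thus ?thesis using fibI[OF l2(1) l1(1)] l t by auto
        qed
        thus "q \<in> R" using Rsw t l by blast
      qed
      moreover have "sw x y z t l1 \<in> C" "sw x y z t l2 \<in> C" unfolding C_def by auto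
      ultimately show False using o cov dis l1 l2 unfolding connected_def by blast
    qed
    have c3: "T e1 \<inter> Th \<noteq> {}" "T e2 \<inter> Th \<noteq> {}"
    proof -
      from ne(1) obtain q where "q \<in> e1" "q \<in> R" by blast
      then obtain t l where "0 < t" "t < 1" "l \<in> Fib t" "q = sw x y z t l" using Rsw by blast
      thus "T e1 \<inter> Th \<noteq> {}" unfolding T_def Th_def using \<open>q \<in> e1\<close> by blast
    next
      from ne(2) obtain q where "q \<in> e2" "q \<in> R" by blast
      then obtain t l where "0 < t" "t < 1" "l \<in> Fib t" "q = sw x y z t l" using Rsw by blast
      thus "T e2 \<inter> Th \<noteq> {}" unfolding T_def Th_def using \<open>q \<in> e2\<close> by blast
    qed
    have "\<not> connected Th" unfolding connected_def using oT[OF o(1)] oT[OF o(2)] c1 c2 c3 by blast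
    thus False using is_interval_connected[OF Thint] by simp
  qed
qed


definition G :: "bool \<Rightarrow> bool \<Rightarrow> real \<Rightarrow> real \<Rightarrow> bool" where
 "G si sj ki kj = (if si = sj then kj < ki else ki < kj)"

definition NS :: "bool \<Rightarrow> bool \<Rightarrow> bool \<Rightarrow> real \<Rightarrow> real \<Rightarrow> real \<Rightarrow> bool" where
 "NS s1 s2 s3 k1 k2 k3 = (\<not>(G s1 s2 k1 k2 \<and> G s2 s3 k2 k3 \<and> G s3 s1 k3 k1) \<and> \<not>(G s2 s1 k2 k1 \<and> G s3 s2 k3 k2 \<and> G s1 s3 k1 k3)
   \<and> (k1 = k2 \<longrightarrow> s1 = s2) \<and> (k2 = k3 \<longrightarrow> s2 = s3) \<and> (k1 = k3 \<longrightarrow> s1 = s3))"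

definition IN :: "bool \<Rightarrow> bool \<Rightarrow> bool \<Rightarrow> real \<Rightarrow> real \<Rightarrow> real \<Rightarrow> bool" where
 "IN s1 s2 s3 k1 k2 k3 = ((G s1 s2 k1 k2 \<and> G s2 s3 k2 k3 \<and> G s3 s1 k3 k1) \<or> (G s2 s1 k2 k1 \<and> G s3 s2 k3 k2 \<and> G s1 s3 k1 k3))"

lemma coreM1:
  assumes "IN s3 s2 s1 k3 k2 k1"
   "NS s1 s2 s4 k1 k2 k4" "NS s1 s3 s5 k1 k3 k5" "NS s2 s3 s6 k2 k3 k6" "NS s4 s5 s6 k4 k5 k6"
  shows "IN s5 s4 s1 k5 k4 k1 \<or> IN s6 s4 s2 k6 k4 k2 \<or> IN s6 s5 s3 k6 k5 k3"
  using assms unfolding IN_def NS_def G_def by smt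

lemma coreQ:
  assumes "IN s3 s2 s1 k3 k2 k1" "IN s5 s4 s1 k5 k4 k1"
   "NS s1 s2 s4 k1 k2 k4" "NS s1 s3 s5 k1 k3 k5" "k2 = k3 \<longrightarrow> s2 = s3" "k4 = k5 \<longrightarrow> s4 = s5"
  shows "G s3 s2 k3 k2 \<longleftrightarrow> G s5 s4 k5 k4"
  using assms unfolding IN_def NS_def G_def by smt

definition Hh :: "pt \<Rightarrow> real \<Rightarrow> pt \<Rightarrow> real" where
  "Hh q t a = (a$2 - q$2) - t * (a$1 - q$1)"
definition Kk :: "pt \<Rightarrow> real \<Rightarrow> pt \<Rightarrow> real" where
  "Kk q t a = ((a$1 - q$1) + t * (a$2 - q$2)) / Hh q t a"

lemma dt_q: "dt q a b = (a$1 - q$1) * (b$2 - q$2) - (a$2 - q$2) * (b$1 - q$1)"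
  unfolding dt_def by simp

lemma key_id:
  assumes "Hh q t a \<noteq> 0" "Hh q t b \<noteq> 0"
  shows "(1 + t * t) * dt q a b = Hh q t a * Hh q t b * (Kk q t a - Kk q t b)"
proof -
  have "Hh q t a * Hh q t b * (Kk q t a - Kk q t b) =
      ((a$1 - q$1) + t * (a$2 - q$2)) * Hh q t b - ((b$1 - q$1) + t * (b$2 - q$2)) * Hh q t a"
    unfolding Kk_def using assms by (simp add: field_simps)
  also have "\<dots> = (1 + t * t) * dt q a b" unfolding Hh_def dt_q by (simp add: algebra_simps)
  finally show ?thesis by simp
qed

lemma bridge_pos:
  assumes "Hh q t a \<noteq> 0" "Hh q t b \<noteq> 0"
  shows "dt q a b > 0 \<longleftrightarrow> G (Hh q t a > 0) (Hh q t b > 0) (Kk q t a) (Kk q t b)"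
proof -
  have p: "1 + t * t > 0" by (smt (verit) zero_le_square)
  have "dt q a b > 0 \<longleftrightarrow> (1 + t * t) * dt q a b > 0" using p by (simp add: zero_less_mult_iff)
  also have "\<dots> \<longleftrightarrow> Hh q t a * Hh q t b * (Kk q t a - Kk q t b) > 0" using key_id[OF assms] by simp
  also have "\<dots> \<longleftrightarrow> G (Hh q t a > 0) (Hh q t b > 0) (Kk q t a) (Kk q t b)"
    unfolding G_def using assms by (auto simp: zero_less_mult_iff mult_less_0_iff)
  finally show ?thesis .
qed

lemma bridge_neg:
  assumes "Hh q t a \<noteq> 0" "Hh q t b \<noteq> 0"
  shows "dt q a b < 0 \<longleftrightarrow> G (Hh q t b > 0) (Hh q t a > 0) (Kk q t b) (Kk q t a)"
proof -
  have "dt q a b < 0 \<longleftrightarrow> dt q b a > 0" unfolding dt_q by (simp add: algebra_simps)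
  thus ?thesis using bridge_pos[OF assms(2,1)] by simp
qed

lemma IN_iff:
  assumes "Hh q t a \<noteq> 0" "Hh q t b \<noteq> 0" "Hh q t c \<noteq> 0"
  shows "inT q a b c \<longleftrightarrow> IN (Hh q t a > 0) (Hh q t b > 0) (Hh q t c > 0) (Kk q t a) (Kk q t b) (Kk q t c)"
  unfolding inT_iff IN_def
  using bridge_pos[OF assms(1,2)] bridge_pos[OF assms(2,3)] bridge_pos[OF assms(3,1)]
    bridge_neg[OF assms(1,2)] bridge_neg[OF assms(2,3)] bridge_neg[OF assms(3,1)] by simp

lemma pair_same:
  fixes a b q :: pt
  assumes "convex S" "a \<in> S" "b \<in> S" "q \<notin> S" "Hh q t a \<noteq> 0" "Hh q t b \<noteq> 0" "Kk q t a = Kk q t b"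
  shows "(Hh q t a > 0) = (Hh q t b > 0)"
proof (rule ccontr)
  assume ne: "(Hh q t a > 0) \<noteq> (Hh q t b > 0)"
  let ?ha = "Hh q t a" and ?hb = "Hh q t b"
  have d0: "dt q a b = 0" using key_id[OF assms(5,6)] assms(7) by (simp add: add_nonneg_eq_0_iff)
  have hd: "?hb - ?ha \<noteq> 0" using ne by auto
  define m where "m = ?hb / (?hb - ?ha)"
  have m: "0 \<le> m" "0 \<le> 1 - m" using ne assms(5,6) unfolding m_def
    by (auto simp: divide_simps split: if_splits)
  have c1: "?hb * (a$1 - q$1) - ?ha * (b$1 - q$1) = 0" using d0 unfolding Hh_def dt_q by (simp add: algebra_simps)
  have c2: "?hb * (a$2 - q$2) - ?ha * (b$2 - q$2) = 0"
  proof -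
    have "?hb * (a$2 - q$2) - ?ha * (b$2 - q$2) = t * dt q a b" unfolding Hh_def dt_q by (simp add: algebra_simps)
    thus ?thesis using d0 by simp
  qed
  have "q = m *\<^sub>R a + (1 - m) *\<^sub>R b"
  proof -
    have "q$i = m * a$i + (1 - m) * b$i" if "?hb * (a$i - q$i) - ?ha * (b$i - q$i) = 0" for i
    proof -
      have "m * a$i + (1 - m) * b$i - q$i = (?hb * (a$i - q$i) - ?ha * (b$i - q$i)) / (?hb - ?ha)"
        unfolding m_def using hd by (simp add: divide_simps) (simp add: algebra_simps)
      thus ?thesis using that by simp
    qed
    thus ?thesis unfolding vec2_eq using c1 c2 by simp
  qed
  hence "q \<in> S" using convexD[OF assms(1-3) m(1) m(2)] by simp
  thus False using assms(4) by simp
qed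

lemma set_NS:
  fixes a b c q :: pt
  assumes "convex S" "a \<in> S" "b \<in> S" "c \<in> S" "q \<notin> S" "Hh q t a \<noteq> 0" "Hh q t b \<noteq> 0" "Hh q t c \<noteq> 0"
  shows "NS (Hh q t a > 0) (Hh q t b > 0) (Hh q t c > 0) (Kk q t a) (Kk q t b) (Kk q t c)"
proof -
  have "\<not> inT q a b c" using inT_convex assms(1-5) by blast
  hence "\<not> IN (Hh q t a > 0) (Hh q t b > 0) (Hh q t c > 0) (Kk q t a) (Kk q t b) (Kk q t c)"
    using IN_iff[OF assms(6-8)] by simp
  moreover have "Kk q t a = Kk q t b \<longrightarrow> (Hh q t a > 0) = (Hh q t b > 0)"
    using pair_same[OF assms(1,2,3,5,6,7)] by blast
  moreover have "Kk q t b = Kk q t c \<longrightarrow> (Hh q t b > 0) = (Hh q t c > 0)"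
    using pair_same[OF assms(1,3,4,5,7,8)] by blast
  moreover have "Kk q t a = Kk q t c \<longrightarrow> (Hh q t a > 0) = (Hh q t c > 0)"
    using pair_same[OF assms(1,2,4,5,6,8)] by blast
  ultimately show ?thesis unfolding NS_def IN_def by blast
qed

lemma exists_t:
  fixes q :: pt
  assumes "finite A" "q \<notin> A"
  shows "\<exists>t. \<forall>a\<in>A. Hh q t a \<noteq> 0"
proof -
  obtain t where t: "t \<notin> (\<lambda>a. (a$2 - q$2) / (a$1 - q$1)) ` A"
    using ex_new_if_finite[OF infinite_UNIV_char_0] assms(1) by blast
  have "Hh q t a \<noteq> 0" if a: "a \<in> A" for a
  proof
    assume h: "Hh q t a = 0"
    show False
    proof (cases "a$1 = q$1")
      case True
      hence "a$2 = q$2" using h unfolding Hh_def by simp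
      hence "a = q" using True unfolding vec2_eq by simp
      thus False using a assms(2) by simp
    next
      case False
      hence "t = (a$2 - q$2) / (a$1 - q$1)" using h unfolding Hh_def by (simp add: field_simps)
      thus False using t a by auto
    qed
  qed
  thus ?thesis by blast
qed


lemma M1_pts:
  fixes q xy xz yz xw yw zw :: pt
  assumes cX: "convex X" and cY: "convex Y" and cZ: "convex Z" and cW: "convex W"
    and m: "xy \<in> X" "xy \<in> Y" "xz \<in> X" "xz \<in> Z" "yz \<in> Y" "yz \<in> Z"
      "xw \<in> X" "xw \<in> W" "yw \<in> Y" "yw \<in> W" "zw \<in> Z" "zw \<in> W"
    and q: "q \<notin> X" "q \<notin> Y" "q \<notin> Z" "q \<notin> W"
    and h: "inT q yz xz xy"
  shows "inT q yw xw xy \<or> inT q zw xw xz \<or> inT q zw yw yz"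
proof -
  have "finite {xy, xz, yz, xw, yw, zw}" by simp
  moreover have "q \<notin> {xy, xz, yz, xw, yw, zw}" using m q by auto
  ultimately obtain t where t: "\<forall>a\<in>{xy, xz, yz, xw, yw, zw}. Hh q t a \<noteq> 0" using exists_t by blast
  hence n: "Hh q t xy \<noteq> 0" "Hh q t xz \<noteq> 0" "Hh q t yz \<noteq> 0" "Hh q t xw \<noteq> 0" "Hh q t yw \<noteq> 0" "Hh q t zw \<noteq> 0"
    by auto
  note IN1 = IN_iff[OF n(3) n(2) n(1)]
  have "IN (Hh q t yw > 0) (Hh q t xw > 0) (Hh q t xy > 0) (Kk q t yw) (Kk q t xw) (Kk q t xy) \<or>
        IN (Hh q t zw > 0) (Hh q t xw > 0) (Hh q t xz > 0) (Kk q t zw) (Kk q t xw) (Kk q t xz) \<or>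
        IN (Hh q t zw > 0) (Hh q t yw > 0) (Hh q t yz > 0) (Kk q t zw) (Kk q t yw) (Kk q t yz)"
    by (rule coreM1[OF h[unfolded IN1] set_NS[OF cX m(1) m(3) m(7) q(1) n(1) n(2) n(4)]
          set_NS[OF cY m(2) m(5) m(9) q(2) n(1) n(3) n(5)] set_NS[OF cZ m(4) m(6) m(11) q(3) n(2) n(3) n(6)]
          set_NS[OF cW m(8) m(10) m(12) q(4) n(4) n(5) n(6)]])
  thus ?thesis using IN_iff[OF n(5) n(4) n(1)] IN_iff[OF n(6) n(4) n(2)] IN_iff[OF n(6) n(5) n(3)] by blast
qed

lemma Q_pts:
  fixes q xy xz yz xw yw :: pt
  assumes cX: "convex X" and cY: "convex Y" and cZ: "convex Z" and cW: "convex W"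
    and m: "xy \<in> X" "xy \<in> Y" "xz \<in> X" "xz \<in> Z" "yz \<in> Y" "yz \<in> Z"
      "xw \<in> X" "xw \<in> W" "yw \<in> Y" "yw \<in> W"
    and q: "q \<notin> X" "q \<notin> Y" "q \<notin> Z" "q \<notin> W"
    and h1: "inT q yz xz xy" and h2: "inT q yw xw xy"
  shows "dt q yz xz > 0 \<longleftrightarrow> dt q yw xw > 0"
proof -
  have "finite {xy, xz, yz, xw, yw}" by simp
  moreover have "q \<notin> {xy, xz, yz, xw, yw}" using m q by auto
  ultimately obtain t where t: "\<forall>a\<in>{xy, xz, yz, xw, yw}. Hh q t a \<noteq> 0" using exists_t by blast
  hence n: "Hh q t xy \<noteq> 0" "Hh q t xz \<noteq> 0" "Hh q t yz \<noteq> 0" "Hh q t xw \<noteq> 0" "Hh q t yw \<noteq> 0"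
    by auto
  have "G (Hh q t yz > 0) (Hh q t xz > 0) (Kk q t yz) (Kk q t xz) \<longleftrightarrow> G (Hh q t yw > 0) (Hh q t xw > 0) (Kk q t yw) (Kk q t xw)"
    by (rule coreQ[OF h1[unfolded IN_iff[OF n(3) n(2) n(1)]] h2[unfolded IN_iff[OF n(5) n(4) n(1)]]
          set_NS[OF cX m(1) m(3) m(7) q(1) n(1) n(2) n(4)] set_NS[OF cY m(2) m(5) m(9) q(2) n(1) n(3) n(5)]])
       (use pair_same[OF cZ m(4) m(6) q(3) n(2) n(3)] pair_same[OF cW m(8) m(10) q(4) n(4) n(5)] in auto)
  thus ?thesis using bridge_pos[OF n(3) n(2)] bridge_pos[OF n(5) n(4)] by simp
qed

lemma orient_inT:
  assumes "inT q a b c"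
  shows "orient a b c = (if dt q a b > 0 then 1 else -1)"
proof -
  have e: "dt a b c = dt q a b + dt q b c + dt q c a"
    using dt_sum[of b c q a] dt_cyc[of a b q] dt_cyc[of b c q] dt_cyc[of c a q] by linarith
  show ?thesis using assms unfolding inT_iff orient_dt e by auto
qed


lemma hollow_eq:
  fixes x y z :: pt
  assumes kX: "compact X" and kY: "compact Y" and kZ: "compact Z"
    and cX: "convex X" and cY: "convex Y" and cZ: "convex Z" and e: "X \<inter> Y \<inter> Z = {}"
    and x: "x \<in> Y" "x \<in> Z" and y: "y \<in> X" "y \<in> Z" and z: "z \<in> X" "z \<in> Y"
  shows "hollow X Y Z = {q. inT q x y z} - (X \<union> Y \<union> Z)"
proof -
  define V where "V = X \<union> Y \<union> Z"
  define H where "H = {q. inT q x y z} - V"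
  have clX: "closed X" "closed Y" "closed Z" using kX kY kZ compact_imp_closed by auto
  have D: "dt x y z \<noteq> 0" using nondeg[OF cX cY cZ e x y z] .
  have ins: "inside V = H" unfolding V_def H_def by (rule inside_char[OF cX cY cZ e x y z])
  have conH: "connected H" unfolding H_def V_def by (rule hole_connected[OF cX cY cZ clX e x y z])
  have "H \<noteq> {}"
  proof -
    have side: "closed_segment z y \<subseteq> X" using closed_segment_subset[OF z(1) y(1) cX] .
    have e': "Y \<inter> Z \<inter> X = {}" using e by auto
    obtain t l where tl: "0 < t" "t < 1" "0 < l" "l < 1" "sw x y z t l \<notin> X \<union> Y \<union> Z"
      using kkm[OF clX(1) clX(2) clX(3) cY cZ x z(2) y(2) side e'] by blast
    have "sw x y z t l \<in> H" unfolding H_def V_def using sw_inT[OF D tl(1-4)] tl(5) by auto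
    thus ?thesis by blast
  qed
  then obtain h where h: "h \<in> H" by blast
  have comp: "connected_component_set (- V) h = H"
  proof
    have "H \<subseteq> - V" unfolding H_def by auto
    thus "H \<subseteq> connected_component_set (- V) h" using connected_component_maximal[OF h conH] by blast
  next
    show "connected_component_set (- V) h \<subseteq> H"
    proof
      fix p assume p: "p \<in> connected_component_set (- V) h"
      have "h \<in> inside V" using ins h by simp
      hence bd: "bounded (connected_component_set (- V) h)" unfolding inside_def by simp
      have "connected_component_set (- V) p = connected_component_set (- V) h"
        using p connected_component_eq by blast
      moreover have "p \<notin> V" using p connected_component_in by blast
      ultimately have "p \<in> inside V" using bd unfolding inside_def by simp
      thus "p \<in> H" using ins by simp
    qed
  qed
  have bH: "bounded H" using ins h comp unfolding inside_def by auto
  have "hollow X Y Z = H"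
    unfolding hollow_def V_def[symmetric]
  proof (rule the_equality)
    show "H \<in> components (- V) \<and> bounded H"
      using comp h bH unfolding components_def H_def by auto
  next
    fix K assume K: "K \<in> components (- V) \<and> bounded K"
    then obtain k where k: "k \<in> - V" "K = connected_component_set (- V) k" unfolding components_def by blast
    hence "k \<in> inside V" using K unfolding inside_def by auto
    hence "k \<in> H" using ins by simp
    hence "connected_component_set (- V) k = connected_component_set (- V) h"
      using comp connected_component_eq by blast
    thus "K = H" using k comp by simp
  qed
  thus ?thesis unfolding H_def V_def .
qed

definition pick :: "pt set \<Rightarrow> pt" where "pick S = (SOME p. p \<in> S)"

lemma pick_in: "S \<noteq> {} \<Longrightarrow> pick S \<in> S" unfolding pick_def by (rule someI_ex) blast

lemma orientS_pick: "orientS X Y Z = orient (pick (Y \<inter> Z)) (pick (X \<inter> Z)) (pick (X \<inter> Y))"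
  unfolding orientS_def pick_def by simp

lemma hollow_sym: "hollow X Y Z = hollow Y Z X" "hollow X Y Z = hollow Y X Z"
  unfolding hollow_def by (simp_all add: Un_ac)

lemma orient_cyc: "orient b c a = orient a b c"
proof -
  have "dt b c a = dt a b c" by (rule dt_cyc)
  thus ?thesis unfolding orient_dt by simp
qed

lemma orient_swap: "orient a c b = - orient a b c"
proof -
  have "dt a c b = - dt a b c" unfolding dt_def by algebra
  thus ?thesis unfolding orient_dt by auto
qed

lemma orientS_cyc: "orientS Y Z X = orientS X Y Z"
proof -
  have "Z \<inter> X = X \<inter> Z" "Y \<inter> X = X \<inter> Y" by auto
  thus ?thesis unfolding orientS_pick by (simp only:) (rule orient_cyc)
qed

lemma orientS_swap: "orientS X Z Y = - orientS X Y Z"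
proof -
  have "Z \<inter> Y = Y \<inter> Z" by auto
  thus ?thesis unfolding orientS_pick by (simp only:) (rule orient_swap)
qed

locale fam =
  fixes F :: "pt set set"
  assumes hol: "holey F"
begin

lemma kc: "X \<in> F \<Longrightarrow> compact X" using hol unfolding holey_def by blast
lemma cv: "X \<in> F \<Longrightarrow> convex X" using hol unfolding holey_def by blast
lemma ne: "X \<in> F \<Longrightarrow> Y \<in> F \<Longrightarrow> X \<inter> Y \<noteq> {}" using hol unfolding holey_def by blast
lemma tr: "X \<in> F \<Longrightarrow> Y \<in> F \<Longrightarrow> Z \<in> F \<Longrightarrow> X \<noteq> Y \<Longrightarrow> Y \<noteq> Z \<Longrightarrow> X \<noteq> Z \<Longrightarrow> X \<inter> Y \<inter> Z = {}"
  using hol unfolding holey_def by blast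

lemma pk: "X \<in> F \<Longrightarrow> Y \<in> F \<Longrightarrow> pick (X \<inter> Y) \<in> X" "X \<in> F \<Longrightarrow> Y \<in> F \<Longrightarrow> pick (X \<inter> Y) \<in> Y"
  using pick_in[OF ne] by blast+

lemma hol_eq:
  assumes "X \<in> F" "Y \<in> F" "Z \<in> F" "X \<noteq> Y" "Y \<noteq> Z" "X \<noteq> Z"
  shows "hollow X Y Z = {q. inT q (pick (Y \<inter> Z)) (pick (X \<inter> Z)) (pick (X \<inter> Y))} - (X \<union> Y \<union> Z)"
  using assms by (intro hollow_eq[OF kc[OF assms(1)] kc[OF assms(2)] kc[OF assms(3)] cv[OF assms(1)] cv[OF assms(2)] cv[OF assms(3)]
     tr[OF assms] pk(1)[OF assms(2,3)] pk(2)[OF assms(2,3)] pk(1)[OF assms(1,3)] pk(2)[OF assms(1,3)] pk(1)[OF assms(1,2)] pk(2)[OF assms(1,2)]])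

lemma osgn:
  assumes "X \<in> F" "Y \<in> F" "Z \<in> F" "X \<noteq> Y" "Y \<noteq> Z" "X \<noteq> Z"
  shows "orientS X Y Z = 1 \<or> orientS X Y Z = -1"
proof -
  have "dt (pick (Y \<inter> Z)) (pick (X \<inter> Z)) (pick (X \<inter> Y)) \<noteq> 0"
    by (rule nondeg[OF cv[OF assms(1)] cv[OF assms(2)] cv[OF assms(3)]
     tr[OF assms] pk(1)[OF assms(2,3)] pk(2)[OF assms(2,3)] pk(1)[OF assms(1,3)] pk(2)[OF assms(1,3)] pk(1)[OF assms(1,2)] pk(2)[OF assms(1,2)]])
  thus ?thesis unfolding orientS_pick orient_dt by auto
qed

end


context fam begin

lemma M1_set:
  assumes F: "X \<in> F" "Y \<in> F" "Z \<in> F" "W \<in> F"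
    and d: "X \<noteq> Y" "X \<noteq> Z" "X \<noteq> W" "Y \<noteq> Z" "Y \<noteq> W" "Z \<noteq> W"
    and q: "q \<notin> X" "q \<notin> Y" "q \<notin> Z" "q \<notin> W" and h: "q \<in> hollow X Y Z"
  shows "q \<in> hollow X Y W \<or> q \<in> hollow X Z W \<or> q \<in> hollow Y Z W"
proof -
  have h': "inT q (pick (Y \<inter> Z)) (pick (X \<inter> Z)) (pick (X \<inter> Y))"
    using h hol_eq[OF F(1-3) d(1) d(4) d(2)] by auto
  have "inT q (pick (Y \<inter> W)) (pick (X \<inter> W)) (pick (X \<inter> Y)) \<or> inT q (pick (Z \<inter> W)) (pick (X \<inter> W)) (pick (X \<inter> Z))
      \<or> inT q (pick (Z \<inter> W)) (pick (Y \<inter> W)) (pick (Y \<inter> Z))"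
    by (rule M1_pts[OF cv[OF F(1)] cv[OF F(2)] cv[OF F(3)] cv[OF F(4)]
        pk(1)[OF F(1,2)] pk(2)[OF F(1,2)] pk(1)[OF F(1,3)] pk(2)[OF F(1,3)] pk(1)[OF F(2,3)] pk(2)[OF F(2,3)]
        pk(1)[OF F(1,4)] pk(2)[OF F(1,4)] pk(1)[OF F(2,4)] pk(2)[OF F(2,4)] pk(1)[OF F(3,4)] pk(2)[OF F(3,4)]
        q h'])
  thus ?thesis
    using hol_eq[OF F(1) F(2) F(4) d(1) d(5) d(3)] hol_eq[OF F(1) F(3) F(4) d(2) d(6) d(3)]
      hol_eq[OF F(2) F(3) F(4) d(4) d(6) d(5)] q by auto
qed

lemma Q_set:
  assumes F: "X \<in> F" "Y \<in> F" "Z \<in> F" "W \<in> F"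
    and d: "X \<noteq> Y" "X \<noteq> Z" "X \<noteq> W" "Y \<noteq> Z" "Y \<noteq> W" "Z \<noteq> W"
    and q: "q \<notin> X" "q \<notin> Y" "q \<notin> Z" "q \<notin> W" and h1: "q \<in> hollow X Y Z" and h2: "q \<in> hollow X Y W"
  shows "orientS X Y Z = orientS X Y W"
proof -
  have i1: "inT q (pick (Y \<inter> Z)) (pick (X \<inter> Z)) (pick (X \<inter> Y))"
    using h1 hol_eq[OF F(1-3) d(1) d(4) d(2)] by auto
  have i2: "inT q (pick (Y \<inter> W)) (pick (X \<inter> W)) (pick (X \<inter> Y))"
    using h2 hol_eq[OF F(1) F(2) F(4) d(1) d(5) d(3)] by auto
  have e: "dt q (pick (Y \<inter> Z)) (pick (X \<inter> Z)) > 0 \<longleftrightarrow> dt q (pick (Y \<inter> W)) (pick (X \<inter> W)) > 0"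
    by (rule Q_pts[OF cv[OF F(1)] cv[OF F(2)] cv[OF F(3)] cv[OF F(4)]
        pk(1)[OF F(1,2)] pk(2)[OF F(1,2)] pk(1)[OF F(1,3)] pk(2)[OF F(1,3)] pk(1)[OF F(2,3)] pk(2)[OF F(2,3)]
        pk(1)[OF F(1,4)] pk(2)[OF F(1,4)] pk(1)[OF F(2,4)] pk(2)[OF F(2,4)] q i1 i2])
  show ?thesis unfolding orientS_pick orient_inT[OF i1] orient_inT[OF i2] e ..
qed

lemma N2_set:
  assumes F: "X \<in> F" "Y \<in> F" "W \<in> F" "Z \<in> F"
    and d: "X \<noteq> Y" "X \<noteq> W" "X \<noteq> Z" "Y \<noteq> W" "Y \<noteq> Z" "W \<noteq> Z"
  shows "\<exists>q. q \<in> hollow X Y W \<and> q \<notin> Z"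
proof -
  let ?x = "pick (Y \<inter> W)" and ?y = "pick (X \<inter> W)" and ?z = "pick (X \<inter> Y)"
  have x: "?x \<in> Y" "?x \<in> W" using pk[OF F(2,3)] by auto
  have y: "?y \<in> X" "?y \<in> W" using pk[OF F(1,3)] by auto
  have z: "?z \<in> X" "?z \<in> Y" using pk[OF F(1,2)] by auto
  have cl: "closed X" "closed Y" "closed W" "closed Z" using kc[OF F(1)] kc[OF F(2)] kc[OF F(3)] kc[OF F(4)] compact_imp_closed by auto
  have side: "closed_segment ?z ?y \<subseteq> X \<union> Z" using closed_segment_subset[OF z(1) y(1) cv[OF F(1)]] by blast
  have e: "Y \<inter> W \<inter> (X \<union> Z) = {}" using tr[OF F(1) F(2) F(3) d(1) d(4) d(2)] tr[OF F(2) F(3) F(4) d(4) d(6) d(5)] by blast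
  obtain t l where tl: "0 < t" "t < 1" "0 < l" "l < 1" "sw ?x ?y ?z t l \<notin> (X \<union> Z) \<union> Y \<union> W"
    using kkm[OF closed_Un[OF cl(1) cl(4)] cl(2) cl(3) cv[OF F(2)] cv[OF F(3)] x z(2) y(2) side e] by blast
  have D: "dt ?x ?y ?z \<noteq> 0"
    by (rule nondeg[OF cv[OF F(1)] cv[OF F(2)] cv[OF F(3)] tr[OF F(1) F(2) F(3) d(1) d(4) d(2)] x y z])
  have "sw ?x ?y ?z t l \<in> hollow X Y W"
    using hol_eq[OF F(1) F(2) F(3) d(1) d(4) d(2)] sw_inT[OF D tl(1-4)] tl(5) by auto
  thus ?thesis using tl(5) by blast
qed

lemma dir1:
  assumes F: "X \<in> F" "Y \<in> F" "Z \<in> F" "W \<in> F"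
    and d: "X \<noteq> Y" "X \<noteq> Z" "X \<noteq> W" "Y \<noteq> Z" "Y \<noteq> W" "Z \<noteq> W"
    and o: "orientS X Y W = s" "orientS Y Z W = s" "orientS Z X W = s" and s: "s \<noteq> 0"
  shows "hollow X Y W \<subseteq> hollow X Y Z \<union> X \<union> Y \<union> Z"
proof
  fix q assume q: "q \<in> hollow X Y W"
  show "q \<in> hollow X Y Z \<union> X \<union> Y \<union> Z"
  proof (cases "q \<in> Z")
    case True thus ?thesis by simp
  next
    case False
    have qn: "q \<notin> X" "q \<notin> Y" "q \<notin> W" using q hol_eq[OF F(1) F(2) F(4) d(1) d(5) d(3)] by auto
    have "q \<in> hollow X Y Z \<or> q \<in> hollow X W Z \<or> q \<in> hollow Y W Z"
      by (rule M1_set[OF F(1) F(2) F(4) F(3) d(1) d(3) d(2) d(5) d(4) d(6)[symmetric] qn(1) qn(2) qn(3) False q])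
    moreover have False if h: "q \<in> hollow X W Z"
    proof -
      have "q \<in> hollow X W Y" using q hollow_sym by metis
      hence "orientS X W Y = orientS X W Z"
        by (rule Q_set[OF F(1) F(4) F(2) F(3) d(3) d(1) d(2) d(5)[symmetric] d(6)[symmetric] d(4) qn(1) qn(3) qn(2) False _ h])
      moreover have "orientS X W Y = - s" using orientS_swap[of X Y W] o(1) by simp
      moreover have "orientS X W Z = s" using orientS_cyc[of X W Z] o(3) by simp
      ultimately show False using s by simp
    qed
    moreover have False if h: "q \<in> hollow Y W Z"
    proof -
      have "q \<in> hollow Y W X" using q hollow_sym by metis
      hence "orientS Y W X = orientS Y W Z"
        by (rule Q_set[OF F(2) F(4) F(1) F(3) d(5) d(1)[symmetric] d(4) d(3)[symmetric] d(6)[symmetric] d(2) qn(2) qn(3) qn(1) False _ h])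
      moreover have "orientS Y W X = s" using orientS_cyc[of X Y W] orientS_cyc[of Y W X] o(1) by simp
      moreover have "orientS Y W Z = - s" using orientS_swap[of Y Z W] o(2) by simp
      ultimately show False using s by simp
    qed
    ultimately show ?thesis by blast
  qed
qed

lemma dir2:
  assumes F: "X \<in> F" "Y \<in> F" "Z \<in> F" "W \<in> F"
    and d: "X \<noteq> Y" "X \<noteq> Z" "X \<noteq> W" "Y \<noteq> Z" "Y \<noteq> W" "Z \<noteq> W"
    and inc: "hollow X Y W \<subseteq> hollow X Y Z \<union> X \<union> Y \<union> Z"
  shows "orientS X Y W = orientS X Y Z"
proof -
  obtain q where q: "q \<in> hollow X Y W" "q \<notin> Z"
    using N2_set[OF F(1) F(2) F(4) F(3) d(1) d(3) d(2) d(5) d(4) d(6)[symmetric]] by blast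
  have qn: "q \<notin> X" "q \<notin> Y" "q \<notin> W" using q hol_eq[OF F(1) F(2) F(4) d(1) d(5) d(3)] by auto
  have "q \<in> hollow X Y Z" using inc q qn by blast
  thus ?thesis using Q_set[OF F(1) F(2) F(4) F(3) d(1) d(3) d(2) d(5) d(4) d(6)[symmetric] qn(1) qn(2) qn(3) q(2) q(1)]
    by simp
qed

end

theorem mainTheorem7:
  fixes F :: "pt set set" and A B C O' :: "pt set"
  assumes "holey F"
    and "A \<in> F" "B \<in> F" "C \<in> F" "O' \<in> F"
    and "distinct [A, B, C, O']"
  shows "in_conv O' A B C \<longleftrightarrow>
         hollow A B O' \<union> hollow B C O' \<union> hollow C A O' \<subseteq> hollow A B C \<union> A \<union> B \<union> C"
proof -
  interpret fam F by standard (rule assms(1))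
  have F: "A \<in> F" "B \<in> F" "C \<in> F" "O' \<in> F" using assms by auto
  have d: "A \<noteq> B" "A \<noteq> C" "A \<noteq> O'" "B \<noteq> C" "B \<noteq> O'" "C \<noteq> O'" using assms(6) by auto
  have hs1: "hollow B C A = hollow A B C" "hollow C A B = hollow A B C" using hollow_sym by metis+
  have us: "B \<union> C \<union> A = A \<union> B \<union> C" "C \<union> A \<union> B = A \<union> B \<union> C" by auto
  have os: "orientS B C A = orientS A B C" "orientS C A B = orientS A B C" using orientS_cyc by metis+
  show ?thesis
  proof
    assume ic: "in_conv O' A B C"
    then obtain s where s: "s \<noteq> 0" "orientS A B O' = s" "orientS B C O' = s" "orientS C A O' = s"
      unfolding in_conv_def by (metis zero_neq_one neg_equal_0_iff_equal)
    have "hollow A B O' \<subseteq> hollow A B C \<union> A \<union> B \<union> C"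
      by (rule dir1[OF F d s(2) s(3) s(4) s(1)])
    moreover have "hollow B C O' \<subseteq> hollow A B C \<union> A \<union> B \<union> C"
      using dir1[OF F(2) F(3) F(1) F(4) d(4) d(1)[symmetric] d(5) d(2)[symmetric] d(6) d(3) s(3) s(4) s(2) s(1)]
      unfolding hs1 by blast
    moreover have "hollow C A O' \<subseteq> hollow A B C \<union> A \<union> B \<union> C"
      using dir1[OF F(3) F(1) F(2) F(4) d(2)[symmetric] d(4)[symmetric] d(6) d(1) d(3) d(5) s(4) s(2) s(3) s(1)]
      unfolding hs1 by blast
    ultimately show "hollow A B O' \<union> hollow B C O' \<union> hollow C A O' \<subseteq> hollow A B C \<union> A \<union> B \<union> C" by blast
  next
    assume inc: "hollow A B O' \<union> hollow B C O' \<union> hollow C A O' \<subseteq> hollow A B C \<union> A \<union> B \<union> C"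
    have "orientS A B O' = orientS A B C"
      by (rule dir2[OF F d]) (use inc in blast)
    moreover have "orientS B C O' = orientS A B C"
    proof -
      have "hollow B C O' \<subseteq> hollow B C A \<union> B \<union> C \<union> A" using inc unfolding hs1 by blast
      from dir2[OF F(2) F(3) F(1) F(4) d(4) d(1)[symmetric] d(5) d(2)[symmetric] d(6) d(3) this] os show ?thesis by simp
    qed
    moreover have "orientS C A O' = orientS A B C"
    proof -
      have "hollow C A O' \<subseteq> hollow C A B \<union> C \<union> A \<union> B" using inc unfolding hs1 by blast
      from dir2[OF F(3) F(1) F(2) F(4) d(2)[symmetric] d(4)[symmetric] d(6) d(1) d(3) d(5) this] os show ?thesis by simp
    qed
    moreover have "orientS A B C = 1 \<or> orientS A B C = -1" by (rule osgn[OF F(1-3) d(1) d(4) d(2)])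
    ultimately show "in_conv O' A B C" unfolding in_conv_def by auto
  qed
qed


end
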